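(* Let $G=(V,E)$ be a hypergraph and let $(U,\overline U)$ be a minimal balanced minimum $k$-partition split in $G$ for some integer $k\ge2$. Then for every vertex $u_0\in U$ there exists a subset $S\subseteq U\setminus\{u_0\}$ with $|S|\le 2k-3$ such that $(U,\overline U)$ is the unique minimum $(S\cup\{u_0\},\overline U)$-terminal cut in $G$.
   Context: A hypergraph $G=(V,E)$ has finite vertex set $V$ and finite multiset $E$ of unit-cost hyperedges (subsets of $V$). For $X\subseteq V$, $\overline X=V\setminus X$ and $d(X)$ is the number of hyperedges meeting both $X$ and $\overline X$. The cost of an (ordered) partition of $V$ into non-empty parts is the number of hyperedges meeting at least two parts; a minimum $k$-partition is a $k$-partition of minimum cost. A 2-partition $(U,\overline U)$ is a balanced minimum $k$-partition split if there is a minimum $k$-partition $(V_1,\dots,V_k)$ with $U=\bigcup_{i=1}^{\lfloor k/2\rfloor}V_i$; it is minimal if there is no balanced minimum $k$-partition split $(U',\overline{U'})$ with $U'\subsetneq U$. For disjoint $S,T\subseteq V$, a 2-partition $(X,\overline X)$ is an $(S,T)$-terminal cut if $S\subseteq X\subseteq V\setminus T$, and it is minimum if $d(X)$ is minimum among such cuts. *)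

theory Defs
  imports Main "HOL-Library.Multiset"
begin

definition hypergraph :: "'a set \<Rightarrow> 'a set multiset \<Rightarrow> bool" where
  "hypergraph V E \<longleftrightarrow> finite V \<and> (\<forall>e\<in>#E. e \<subseteq> V)"

definition cut_val :: "'a set \<Rightarrow> 'a set multiset \<Rightarrow> 'a set \<Rightarrow> nat" where
  "cut_val V E X = size (filter_mset (\<lambda>e. e \<inter> X \<noteq> {} \<and> e \<inter> (V - X) \<noteq> {}) E)"

definition is_k_partition :: "'a set \<Rightarrow> nat \<Rightarrow> (nat \<Rightarrow> 'a set) \<Rightarrow> bool" where
  "is_k_partition V k P \<longleftrightarrow>
     (\<forall>i<k. P i \<noteq> {}) \<and>
     (\<forall>i<k. \<forall>j<k. i \<noteq> j \<longrightarrow> P i \<inter> P j = {}) \<and>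
     (\<Union>i<k. P i) = V"

definition partition_cost :: "'a set multiset \<Rightarrow> nat \<Rightarrow> (nat \<Rightarrow> 'a set) \<Rightarrow> nat" where
  "partition_cost E k P =
     size (filter_mset (\<lambda>e. \<exists>i<k. \<exists>j<k. i \<noteq> j \<and> e \<inter> P i \<noteq> {} \<and> e \<inter> P j \<noteq> {}) E)"

definition min_k_partition :: "'a set \<Rightarrow> 'a set multiset \<Rightarrow> nat \<Rightarrow> (nat \<Rightarrow> 'a set) \<Rightarrow> bool" where
  "min_k_partition V E k P \<longleftrightarrow> is_k_partition V k P \<and>
     (\<forall>Q. is_k_partition V k Q \<longrightarrow> partition_cost E k P \<le> partition_cost E k Q)"

definition balanced_split :: "'a set \<Rightarrow> 'a set multiset \<Rightarrow> nat \<Rightarrow> 'a set \<Rightarrow> bool" where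
  "balanced_split V E k U \<longleftrightarrow>
     (\<exists>P. min_k_partition V E k P \<and> U = (\<Union>i<k div 2. P i))"

definition minimal_balanced_split :: "'a set \<Rightarrow> 'a set multiset \<Rightarrow> nat \<Rightarrow> 'a set \<Rightarrow> bool" where
  "minimal_balanced_split V E k U \<longleftrightarrow>
     balanced_split V E k U \<and> \<not> (\<exists>U'. U' \<subset> U \<and> balanced_split V E k U')"

definition terminal_cut :: "'a set \<Rightarrow> 'a set \<Rightarrow> 'a set \<Rightarrow> 'a set \<Rightarrow> bool" where
  "terminal_cut V S T X \<longleftrightarrow> X \<subseteq> V \<and> X \<noteq> {} \<and> X \<noteq> V \<and> S \<subseteq> X \<and> X \<subseteq> V - T"

definition min_terminal_cut :: "'a set \<Rightarrow> 'a set multiset \<Rightarrow> 'a set \<Rightarrow> 'a set \<Rightarrow> 'a set \<Rightarrow> bool" where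
  "min_terminal_cut V E S T X \<longleftrightarrow> terminal_cut V S T X \<and>
     (\<forall>Y. terminal_cut V S T Y \<longrightarrow> cut_val V E X \<le> cut_val V E Y)"

definition unique_min_terminal_cut :: "'a set \<Rightarrow> 'a set multiset \<Rightarrow> 'a set \<Rightarrow> 'a set \<Rightarrow> 'a set \<Rightarrow> bool" where
  "unique_min_terminal_cut V E S T X \<longleftrightarrow> min_terminal_cut V E S T X \<and>
     (\<forall>Y. min_terminal_cut V E S T Y \<longrightarrow> Y = X)"

end

theory Submission
  imports Defs
begin

lemma dep1_unique:
  assumes "card {j\<in>{..<m}. v \<in> W j} = 1" "i < m" "v \<in> W i" "j < m" "v \<in> W j"
  shows "j = i"
proof -
  from assms(1) obtain x where x: "{j\<in>{..<m}. v \<in> W j} = {x}" by (erule card_1_singletonE)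
  have "i \<in> {j\<in>{..<m}. v \<in> W j}" using assms(2,3) by simp
  moreover have "j \<in> {j\<in>{..<m}. v \<in> W j}" using assms(4,5) by simp
  ultimately show ?thesis unfolding x by simp
qed

lemma edge_comb:
  fixes W :: "nat \<Rightarrow> 'a set" and a :: "'a set" and ob :: bool and m :: nat
  defines "dep \<equiv> \<lambda>v. card {j\<in>{..<m}. v \<in> W j}"
  defines "D \<equiv> \<lambda>i. {v \<in> W i. dep v = 1}"
  defines "L \<equiv> \<lambda>t. {v. t < dep v}"
  assumes m2: "2 \<le> m" and H1: "H1 \<subseteq> {..<m}" and H2: "H2 \<subseteq> {..<m}" and disj: "H1 \<inter> H2 = {}"
  shows "(if \<exists>i\<in>H1. a \<inter> D i \<noteq> {} \<and> (ob \<or> \<not> a \<subseteq> D i) then 1 else 0)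
       + (if \<exists>i\<in>H2. a \<inter> D i \<noteq> {} \<and> (ob \<or> \<not> a \<subseteq> D i) then 1 else 0)
       + card {t\<in>{2..<m}. \<not> a \<subseteq> L t \<and> (ob \<or> a \<inter> L t \<noteq> {})}
       \<le> card {i\<in>{..<m}. \<not> a \<subseteq> W i \<and> (ob \<or> a \<inter> W i \<noteq> {})}"
    (is "?c1 + ?c2 + card ?T \<le> card ?R")
proof -
  define I where "I = (\<lambda>v. {j\<in>{..<m}. v \<in> W j})"
  have depI: "dep v = card (I v)" for v unfolding dep_def I_def by simp
  have finI: "finite (I v)" for v unfolding I_def by simp
  have depm: "dep v \<le> m" for v
  proof -
    have "I v \<subseteq> {..<m}" unfolding I_def by auto
    then have "card (I v) \<le> card {..<m}" by (rule card_mono[rotated]) simp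
    then show ?thesis using depI by simp
  qed
  have Duniq: "j = i" if "v \<in> D i" "i < m" "j < m" "v \<in> W j" for v i j
    using dep1_unique[of m v W i j] that unfolding D_def dep_def by auto
  have DW: "D i \<subseteq> W i" for i unfolding D_def by auto
  have finR: "finite ?R" by simp
  have finT: "finite ?T" by simp
  show ?thesis
  proof (cases "a = {}")
    case True
    then show ?thesis by simp
  next
    case anz: False
    show ?thesis
    proof (cases ob)
      case ob: True
      define C where "C = {i\<in>{..<m}. a \<subseteq> W i}"
      have R_eq: "?R = {..<m} - C" unfolding C_def using ob by auto
      have cardR: "card ?R = m - card C"
      proof -
        have "C \<subseteq> {..<m}" unfolding C_def by auto
        then show ?thesis unfolding R_eq by (simp add: card_Diff_subset finite_subset)
      qed
      have Cle: "card C \<le> dep v" if "v \<in> a" for v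
      proof -
        have "C \<subseteq> I v" unfolding C_def I_def using that by auto
        then have "card C \<le> card (I v)" by (rule card_mono[OF finI])
        then show ?thesis using depI[of v] by simp
      qed
      have Tsub: "?T \<subseteq> {max 2 (card C)..<m}"
      proof
        fix t assume "t \<in> ?T"
        then have t: "2 \<le> t" "t < m" "\<not> a \<subseteq> L t" by auto
        then obtain v where "v \<in> a" "\<not> t < dep v" unfolding L_def by auto
        then have "card C \<le> t" using Cle by fastforce
        then show "t \<in> {max 2 (card C)..<m}" using t by auto
      qed
      have cardT: "card ?T \<le> m - max 2 (card C)"
        using card_mono[OF _ Tsub] by simp
      have Cm: "card C \<le> m"
      proof -
        have "C \<subseteq> {..<m}" unfolding C_def by auto
        then show ?thesis using card_mono[of "{..<m}" C] by simp
      qed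
      have hc: "?c1 + ?c2 + card C \<le> max 2 (card C)"
      proof -
        consider "card C = 0" | "card C = 1" | "card C \<ge> 2" by linarith
        then show ?thesis
        proof cases
          case 1 then show ?thesis by simp
        next
          case 2
          then obtain j where Cj: "C = {j}" by (erule card_1_singletonE)
          then have ajW: "a \<subseteq> W j" "j < m" unfolding C_def by auto
          have onlyj: "i = j" if i12: "i \<in> H1 \<union> H2" "a \<inter> D i \<noteq> {}" for i
          proof -
            obtain v where v: "v \<in> a" "v \<in> D i" using i12(2) by blast
            have "i < m" using i12 H1 H2 by auto
            then show ?thesis using Duniq[OF v(2) \<open>i < m\<close> ajW(2)] ajW v by auto
          qed
          have "\<not> (?c1 = 1 \<and> ?c2 = 1)"
          proof
            assume "?c1 = 1 \<and> ?c2 = 1"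
            then obtain i1 i2 where "i1 \<in> H1" "a \<inter> D i1 \<noteq> {}" "i2 \<in> H2" "a \<inter> D i2 \<noteq> {}"
              by (auto split: if_splits)
            then have "i1 = j" "i2 = j" using onlyj by auto
            then show False using \<open>i1 \<in> H1\<close> \<open>i2 \<in> H2\<close> disj by auto
          qed
          then have "?c1 + ?c2 \<le> 1" by (auto split: if_splits)
          then show ?thesis using 2 by simp
        next
          case 3
          have nD: "a \<inter> D i = {}" for i
          proof (rule ccontr)
            assume "a \<inter> D i \<noteq> {}"
            then obtain v where "v \<in> a" "v \<in> D i" by auto
            then have "dep v = 1" unfolding D_def by auto
            then show False using Cle[OF \<open>v \<in> a\<close>] 3 by simp
          qed
          then show ?thesis using 3 by simp
        qed
      qed
      show ?thesis using hc cardT cardR Cm m2 by linarith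
    next
      case ob: False
      have fin_dep: "finite (dep ` a)"
        by (rule finite_subset[of _ "{..m}"]) (auto simp: depm)
      obtain vmax where vmax: "vmax \<in> a" "\<forall>v\<in>a. dep v \<le> dep vmax"
      proof -
        have "Max (dep ` a) \<in> dep ` a" using fin_dep anz by (intro Max_in) auto
        then obtain w where w: "w \<in> a" "dep w = Max (dep ` a)" by auto
        moreover have "\<forall>v\<in>a. dep v \<le> dep w" using w(2) fin_dep by auto
        ultimately show ?thesis using that by blast
      qed
      obtain vmin where vmin: "vmin \<in> a" "\<forall>v\<in>a. dep vmin \<le> dep v"
        using ex_has_least_nat[of "\<lambda>v. v \<in> a" _ dep] anz by blast
      have Tsub: "?T \<subseteq> {max 2 (dep vmin)..<dep vmax}"
      proof
        fix t assume "t \<in> ?T"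
        then have t: "2 \<le> t" "\<not> a \<subseteq> L t" "a \<inter> L t \<noteq> {}" using ob by auto
        obtain v where "v \<in> a" "\<not> t < dep v" using t(2) unfolding L_def by auto
        then have "dep vmin \<le> t" using vmin by fastforce
        moreover obtain w where "w \<in> a" "t < dep w" using t(3) unfolding L_def by auto
        then have "t < dep vmax" using vmax by fastforce
        ultimately show "t \<in> {max 2 (dep vmin)..<dep vmax}" using t by auto
      qed
      have cardT: "card ?T \<le> dep vmax - max 2 (dep vmin)"
        using card_mono[OF _ Tsub] by simp
      have Kc: "I vmax - I vmin \<subseteq> ?R"
      proof
        fix j assume "j \<in> I vmax - I vmin"
        then have "j < m" "vmax \<in> W j" "vmin \<notin> W j" unfolding I_def by auto
        then show "j \<in> ?R" using vmax vmin by auto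
      qed
      have cardK: "dep vmax - dep vmin \<le> card ?R"
      proof -
        have "card (I vmax) - card (I vmin) \<le> card (I vmax - I vmin)"
          by (rule diff_card_le_card_Diff[OF finI])
        also have "\<dots> \<le> card ?R" by (rule card_mono[OF finR Kc])
        finally show ?thesis using depI by simp
      qed
      have one: "1 + card ?T \<le> card ?R" if i: "i < m" "a \<inter> D i \<noteq> {}" "\<not> a \<subseteq> D i" for i
      proof -
        obtain u where u: "u \<in> a" "u \<in> D i" using i by auto
        have sub: "I vmax - {i} \<subseteq> ?R"
        proof
          fix l assume l: "l \<in> I vmax - {i}"
          then have "l < m" "vmax \<in> W l" "l \<noteq> i" unfolding I_def by auto
          moreover have "u \<notin> W l" using Duniq[OF u(2) i(1) \<open>l < m\<close>] \<open>l \<noteq> i\<close> by auto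
          ultimately show "l \<in> ?R" using u vmax ob by auto
        qed
        have c1: "dep vmax - 1 \<le> card ?R"
        proof -
          have "card (I vmax) - card {i} \<le> card (I vmax - {i})"
            by (rule diff_card_le_card_Diff) simp
          also have "\<dots> \<le> card ?R" by (rule card_mono[OF finR sub])
          finally show ?thesis using depI by simp
        qed
        have c2: "?R \<noteq> {}"
        proof -
          obtain w where w: "w \<in> a" "w \<notin> D i" using i by auto
          show ?thesis
          proof (cases "w \<in> W i")
            case False
            then have "i \<in> ?R" using u w i DW ob by auto
            then show ?thesis by auto
          next
            case True
            then have "dep w \<noteq> 1" using w unfolding D_def by auto
            moreover have "i \<in> I w" using True i unfolding I_def by auto
            moreover have "I w \<noteq> {i}" using \<open>dep w \<noteq> 1\<close> depI[of w] by auto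
            ultimately obtain l where l: "l \<in> I w" "l \<noteq> i" by blast
            then have "l < m" "w \<in> W l" unfolding I_def by auto
            moreover have "u \<notin> W l" using Duniq[OF u(2) i(1) \<open>l < m\<close>] l by auto
            ultimately have "l \<in> ?R" using u w ob by auto
            then show ?thesis by auto
          qed
        qed
        then have "card ?R \<ge> 1" using finR by (simp add: Suc_leI card_gt_0_iff)
        then show ?thesis using c1 cardT by linarith
      qed
      have two: "2 + card ?T \<le> card ?R"
        if i: "i < m" "a \<inter> D i \<noteq> {}" and j: "j < m" "a \<inter> D j \<noteq> {}" and ij: "i \<noteq> j" for i j
      proof -
        obtain ui where ui: "ui \<in> a" "ui \<in> D i" using i by auto
        obtain uj where uj: "uj \<in> a" "uj \<in> D j" using j by auto
        have sub: "insert i (insert j (I vmax)) \<subseteq> ?R"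
        proof
          fix l assume l: "l \<in> insert i (insert j (I vmax))"
          then have lm: "l < m" using i j unfolding I_def by auto
          have nui: "l \<noteq> i \<Longrightarrow> ui \<notin> W l" using Duniq[OF ui(2) i(1) lm] by auto
          have nuj: "l \<noteq> j \<Longrightarrow> uj \<notin> W l" using Duniq[OF uj(2) j(1) lm] by auto
          have "\<not> a \<subseteq> W l" using nui nuj ui uj ij by auto
          moreover have "a \<inter> W l \<noteq> {}"
            using l ui uj DW vmax unfolding I_def by auto
          ultimately show "l \<in> ?R" using lm by auto
        qed
        have "card (insert i (insert j (I vmax))) \<ge> max 2 (dep vmax)"
        proof -
          have "card {i, j} \<le> card (insert i (insert j (I vmax)))"
            by (rule card_mono) (auto simp: finI)
          moreover have "card (I vmax) \<le> card (insert i (insert j (I vmax)))"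
            by (rule card_mono) (auto simp: finI)
          ultimately show ?thesis using ij depI by simp
        qed
        then have "max 2 (dep vmax) \<le> card ?R" using card_mono[OF finR sub] by linarith
        then show ?thesis using cardT by linarith
      qed
      have c1le: "?c1 \<le> 1" "?c2 \<le> 1" by auto
      have "?c1 + ?c2 + card ?T \<le> card ?R"
      proof (cases "\<exists>i\<in>H1. a \<inter> D i \<noteq> {} \<and> \<not> a \<subseteq> D i")
        case True
        then obtain i where i: "i \<in> H1" "a \<inter> D i \<noteq> {}" "\<not> a \<subseteq> D i" by auto
        show ?thesis
        proof (cases "\<exists>j\<in>H2. a \<inter> D j \<noteq> {} \<and> \<not> a \<subseteq> D j")
          case True
          then obtain j where j: "j \<in> H2" "a \<inter> D j \<noteq> {}" by auto
          have "i \<noteq> j" using i j disj by auto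
          then have "2 + card ?T \<le> card ?R" using two[of i j] i j H1 H2 by auto
          then show ?thesis using c1le by linarith
        next
          case False
          then have "?c2 = 0" using ob by auto
          moreover have "1 + card ?T \<le> card ?R" using one[of i] i H1 by auto
          ultimately show ?thesis using c1le by linarith
        qed
      next
        case False
        then have c10: "?c1 = 0" using ob by auto
        show ?thesis
        proof (cases "\<exists>j\<in>H2. a \<inter> D j \<noteq> {} \<and> \<not> a \<subseteq> D j")
          case True
          then obtain j where j: "j \<in> H2" "a \<inter> D j \<noteq> {}" "\<not> a \<subseteq> D j" by auto
          then have "1 + card ?T \<le> card ?R" using one[of j] H2 by auto
          then show ?thesis using c10 c1le by linarith
        next
          case False2: False
          then have "?c2 = 0" using ob by auto
          moreover have "card ?T \<le> card ?R" using cardT cardK by linarith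
          ultimately show ?thesis using c10 by linarith
        qed
      qed
      then show ?thesis .
    qed
  qed
qed

lemma size_filter_mono:
  assumes "\<forall>x\<in>#M. P x \<longrightarrow> Q x"
  shows "size (filter_mset P M) \<le> size (filter_mset Q M)"
  using assms
proof (induction M)
  case empty
  then show ?case by simp
next
  case (add x M)
  then show ?case by auto
qed

lemma card_filter_sum:
  assumes "finite T"
  shows "(\<Sum>t\<in>T. (if C t then 1 else 0)::nat) = card {t\<in>T. C t}"
  using assms by (simp add: sum.inter_filter[symmetric])

lemma sum_edges:
  fixes A B :: "'b \<Rightarrow> bool" and C Dp :: "nat \<Rightarrow> 'b \<Rightarrow> bool"
  assumes fT: "finite T" and fI: "finite I"
    and "\<forall>e\<in>#E. (if A e then 1 else 0) + (if B e then 1 else 0) + card {t\<in>T. C t e}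
                \<le> card {i\<in>I. Dp i e}"
  shows "size (filter_mset A E) + size (filter_mset B E) + (\<Sum>t\<in>T. size (filter_mset (C t) E))
         \<le> (\<Sum>i\<in>I. size (filter_mset (Dp i) E))"
  using assms(3)
proof (induction E)
  case empty
  then show ?case by simp
next
  case (add x E)
  have IH: "size (filter_mset A E) + size (filter_mset B E) + (\<Sum>t\<in>T. size (filter_mset (C t) E))
         \<le> (\<Sum>i\<in>I. size (filter_mset (Dp i) E))" using add by simp
  have x: "(if A x then 1 else 0) + (if B x then 1 else 0) + card {t\<in>T. C t x}
                \<le> card {i\<in>I. Dp i x}" using add.prems by simp
  have sT: "(\<Sum>t\<in>T. size (filter_mset (C t) (add_mset x E)))
      = (\<Sum>t\<in>T. size (filter_mset (C t) E)) + card {t\<in>T. C t x}"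
  proof -
    have "(\<Sum>t\<in>T. size (filter_mset (C t) (add_mset x E)))
        = (\<Sum>t\<in>T. size (filter_mset (C t) E) + (if C t x then 1 else 0))"
      by (intro sum.cong) auto
    also have "\<dots> = (\<Sum>t\<in>T. size (filter_mset (C t) E)) + (\<Sum>t\<in>T. (if C t x then 1 else 0))"
      by (rule sum.distrib)
    finally show ?thesis using card_filter_sum[OF fT] by simp
  qed
  have sI: "(\<Sum>i\<in>I. size (filter_mset (Dp i) (add_mset x E)))
      = (\<Sum>i\<in>I. size (filter_mset (Dp i) E)) + card {i\<in>I. Dp i x}"
  proof -
    have "(\<Sum>i\<in>I. size (filter_mset (Dp i) (add_mset x E)))
        = (\<Sum>i\<in>I. size (filter_mset (Dp i) E) + (if Dp i x then 1 else 0))"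
      by (intro sum.cong) auto
    also have "\<dots> = (\<Sum>i\<in>I. size (filter_mset (Dp i) E)) + (\<Sum>i\<in>I. (if Dp i x then 1 else 0))"
      by (rule sum.distrib)
    finally show ?thesis using card_filter_sum[OF fI] by simp
  qed
  have sA: "size (filter_mset A (add_mset x E)) = size (filter_mset A E) + (if A x then 1 else 0)"
    by simp
  have sB: "size (filter_mset B (add_mset x E)) = size (filter_mset B E) + (if B x then 1 else 0)"
    by simp
  show ?case unfolding sT sI sA sB using IH x by linarith
qed

lemma part_from_sets:
  fixes F :: "nat \<Rightarrow> 'a set"
  assumes k2: "2 \<le> k" and Fne: "\<forall>j<k-1. F j \<noteq> {}" and FU: "\<forall>j<k-1. F j \<subseteq> U"
    and Fdisj: "\<forall>i<k-1. \<forall>j<k-1. i \<noteq> j \<longrightarrow> F i \<inter> F j = {}"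
    and UV: "U \<subseteq> V" and VU: "V - U \<noteq> {}"
  shows "is_k_partition V k (\<lambda>j. if j < k - 1 then F j else V - (\<Union>i<k-1. F i))"
  unfolding is_k_partition_def
proof (intro conjI allI impI)
  let ?R = "V - (\<Union>i<k-1. F i)"
  have UF: "(\<Union>i<k-1. F i) \<subseteq> U" using FU by auto
  fix i assume i: "i < k"
  show "(if i < k - 1 then F i else ?R) \<noteq> {}"
  proof (cases "i < k - 1")
    case True
    then show ?thesis using Fne by simp
  next
    case False
    have "?R \<noteq> {}" using UF VU by blast
    then show ?thesis using False by simp
  qed
next
  let ?R = "V - (\<Union>i<k-1. F i)"
  fix i j assume i: "i < k" and j: "j < k" and ij: "i \<noteq> j"
  show "(if i < k - 1 then F i else ?R) \<inter> (if j < k - 1 then F j else ?R) = {}"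
  proof (cases "i < k - 1")
    case True
    show ?thesis
    proof (cases "j < k - 1")
      case True
      then show ?thesis using \<open>i < k - 1\<close> Fdisj ij by auto
    next
      case False
      then show ?thesis using \<open>i < k - 1\<close> by auto
    qed
  next
    case False
    then have "j < k - 1" using i j ij by auto
    then show ?thesis using False by auto
  qed
next
  let ?R = "V - (\<Union>i<k-1. F i)"
  have UF: "(\<Union>i<k-1. F i) \<subseteq> V" using FU UV by auto
  have k: "{..<k} = insert (k - 1) {..<k-1}" using k2 by auto
  have A: "(\<Union>j<k-1. (if j < k - 1 then F j else ?R)) = (\<Union>j<k-1. F j)"
    by (rule SUP_cong) auto
  have "(\<Union>j<k. (if j < k - 1 then F j else ?R))
      = (if k - 1 < k - 1 then F (k - 1) else ?R) \<union> (\<Union>j<k-1. (if j < k - 1 then F j else ?R))"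
    unfolding k by (rule UN_insert)
  also have "\<dots> = ?R \<union> (\<Union>j<k-1. F j)" unfolding A by simp
  finally show "(\<Union>j<k. (if j < k - 1 then F j else ?R)) = V" using UF by auto
qed

lemma cost_le:
  fixes F :: "nat \<Rightarrow> 'a set"
  assumes Fdisj: "\<forall>i<k-1. \<forall>j<k-1. i \<noteq> j \<longrightarrow> F i \<inter> F j = {}"
  shows "partition_cost E k (\<lambda>j. if j < k - 1 then F j else V - (\<Union>i<k-1. F i))
         \<le> size (filter_mset (\<lambda>e. \<exists>i<k-1. e \<inter> F i \<noteq> {} \<and> \<not> e \<subseteq> F i) E)"
  unfolding partition_cost_def
proof (rule size_filter_mono, intro ballI impI)
  let ?P = "\<lambda>j. if j < k - 1 then F j else V - (\<Union>i<k-1. F i)"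
  fix e assume "\<exists>i<k. \<exists>j<k. i \<noteq> j \<and> e \<inter> ?P i \<noteq> {} \<and> e \<inter> ?P j \<noteq> {}"
  then obtain i j where i: "i < k" and j: "j < k" and ij: "i \<noteq> j"
    and ei: "e \<inter> ?P i \<noteq> {}" and ej: "e \<inter> ?P j \<noteq> {}" by blast
  have key: "\<exists>i<k-1. e \<inter> F i \<noteq> {} \<and> \<not> e \<subseteq> F i"
    if a: "a < k - 1" "b < k" "a \<noteq> b" "e \<inter> ?P a \<noteq> {}" "e \<inter> ?P b \<noteq> {}" for a b
  proof -
    have "?P a \<inter> ?P b = {}"
    proof (cases "b < k - 1")
      case True
      then show ?thesis using a Fdisj by auto
    next
      case False
      then show ?thesis using a by auto
    qed
    then have "\<not> e \<subseteq> F a" using a by auto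
    moreover have "e \<inter> F a \<noteq> {}" using a by auto
    ultimately show ?thesis using a(1) by blast
  qed
  show "\<exists>i<k-1. e \<inter> F i \<noteq> {} \<and> \<not> e \<subseteq> F i"
  proof (cases "i < k - 1")
    case True
    then show ?thesis using key[of i j] j ij ei ej by blast
  next
    case False
    then have "j < k - 1" using i j ij by auto
    then show ?thesis using key[of j i] i ij ei ej by blast
  qed
qed

theorem theorem5p2:
  fixes V :: "'a set" and E :: "'a set multiset" and k :: nat and U :: "'a set"
  assumes "hypergraph V E"
    and "k \<ge> 2"
    and "minimal_balanced_split V E k U"
    and "u0 \<in> U"
  shows "\<exists>S. S \<subseteq> U - {u0} \<and> card S \<le> 2 * k - 3 \<and>
           unique_min_terminal_cut V E (S \<union> {u0}) (V - U) U"
proof -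
  note hg = assms(1) and k2 = assms(2) and mbs = assms(3) and u0U = assms(4)
  have finV: "finite V" and EV: "\<And>e. e \<in># E \<Longrightarrow> e \<subseteq> V"
    using hg unfolding hypergraph_def by auto
  define h where "h = k div 2"
  have h1: "1 \<le> h" and hk: "h \<le> k - 1" using k2 unfolding h_def by presburger+
  from mbs obtain P where minP: "min_k_partition V E k P" and Ueq: "U = (\<Union>i<h. P i)"
    unfolding minimal_balanced_split_def balanced_split_def h_def by blast
  have nomin: "\<not> balanced_split V E k U'" if "U' \<subset> U" for U'
    using mbs that unfolding minimal_balanced_split_def by blast
  have kp: "is_k_partition V k P"
    and optP: "\<And>Q. is_k_partition V k Q \<Longrightarrow> partition_cost E k P \<le> partition_cost E k Q"
    using minP unfolding min_k_partition_def by auto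
  define OPT where "OPT = partition_cost E k P"
  have Pne: "\<And>i. i < k \<Longrightarrow> P i \<noteq> {}"
    and Pdisj: "\<And>i j. i < k \<Longrightarrow> j < k \<Longrightarrow> i \<noteq> j \<Longrightarrow> P i \<inter> P j = {}"
    and Pun: "(\<Union>i<k. P i) = V"
    using kp unfolding is_k_partition_def by auto
  have UV: "U \<subseteq> V" using Pun Ueq hk by auto
  have VU: "V - U \<noteq> {}"
  proof -
    obtain v where v: "v \<in> P (k - 1)" using Pne[of "k - 1"] k2 by auto
    have "v \<in> V" using v Pun k2 by auto
    moreover have "v \<notin> U"
    proof
      assume "v \<in> U"
      then obtain i where i: "i < h" "v \<in> P i" using Ueq by auto
      then have "P i \<inter> P (k - 1) \<noteq> {}" using v by auto
      moreover have "i \<noteq> k - 1" "i < k" using i hk by auto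
      ultimately show False using Pdisj[of i "k - 1"] k2 by auto
    qed
    ultimately show ?thesis by auto
  qed
  have strict: "OPT < partition_cost E k Q" if Q: "is_k_partition V k Q" and sub: "(\<Union>i<h. Q i) \<subset> U" for Q
  proof (rule ccontr)
    assume "\<not> OPT < partition_cost E k Q"
    then have "min_k_partition V E k Q" using Q optP unfolding min_k_partition_def OPT_def
      by (meson le_trans not_less)
    then have "balanced_split V E k (\<Union>i<h. Q i)" unfolding balanced_split_def h_def by blast
    then show False using nomin sub by blast
  qed
  define cU where "cU = cut_val V E U"
  have cU_le: "cU \<le> OPT"
    unfolding cU_def OPT_def cut_val_def partition_cost_def
  proof (rule size_filter_mono, intro ballI impI)
    fix e assume eE: "e \<in># E" and ecr: "e \<inter> U \<noteq> {} \<and> e \<inter> (V - U) \<noteq> {}"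
    obtain v where v: "v \<in> e" "v \<in> U" using ecr by auto
    then obtain i where i: "i < h" "v \<in> P i" using Ueq by auto
    obtain w where w: "w \<in> e" "w \<in> V" "w \<notin> U" using ecr by auto
    then obtain j where j: "j < k" "w \<in> P j" using Pun by auto
    have "\<not> j < h" using j w Ueq by auto
    then have "i \<noteq> j" "i < k" using i hk by auto
    then show "\<exists>i<k. \<exists>j<k. i \<noteq> j \<and> e \<inter> P i \<noteq> {} \<and> e \<inter> P j \<noteq> {}"
      using i j v w by blast
  qed
  define bad where "bad = (\<lambda>W. W \<subseteq> U - {u0} \<and> W \<noteq> {} \<and> cut_val V E (U - W) \<le> cU)"
  define hit where "hit = (\<lambda>S. S \<subseteq> U - {u0} \<and> (\<forall>W. bad W \<longrightarrow> W \<inter> S \<noteq> {}))"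
  have hitU: "hit (U - {u0})" unfolding hit_def bad_def by auto
  obtain S where hS: "hit S" and Smin: "\<And>S'. hit S' \<Longrightarrow> card S \<le> card S'"
    using ex_has_least_nat[of hit "U - {u0}" card] hitU by blast
  have finU: "finite U" using UV finV finite_subset by blast
  have SU: "S \<subseteq> U - {u0}" using hS unfolding hit_def by auto
  have finS: "finite S" using SU finU finite_subset by blast
  have Shit: "\<And>W. bad W \<Longrightarrow> W \<inter> S \<noteq> {}" using hS unfolding hit_def by auto
  show ?thesis
  proof (cases "card S \<le> 2 * k - 3")
    case True
    have tU: "terminal_cut V (S \<union> {u0}) (V - U) U"
      unfolding terminal_cut_def using UV u0U VU SU by auto
    have gt: "cU < cut_val V E Y" if Y: "terminal_cut V (S \<union> {u0}) (V - U) Y" and YU: "Y \<noteq> U" for Y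
    proof -
      have YsubU: "Y \<subseteq> U" and SY: "S \<union> {u0} \<subseteq> Y" using Y unfolding terminal_cut_def by auto
      have "\<not> bad (U - Y)"
      proof
        assume "bad (U - Y)"
        then have "(U - Y) \<inter> S \<noteq> {}" by (rule Shit)
        then show False using SY by auto
      qed
      moreover have "U - Y \<subseteq> U - {u0}" "U - Y \<noteq> {}" using SY YsubU YU by auto
      ultimately have "\<not> cut_val V E (U - (U - Y)) \<le> cU" unfolding bad_def by auto
      moreover have "U - (U - Y) = Y" using YsubU by auto
      ultimately show ?thesis by auto
    qed
    have "unique_min_terminal_cut V E (S \<union> {u0}) (V - U) U"
      unfolding unique_min_terminal_cut_def min_terminal_cut_def
    proof (intro conjI allI impI)
      show "terminal_cut V (S \<union> {u0}) (V - U) U" by (rule tU)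
    next
      fix Y assume "terminal_cut V (S \<union> {u0}) (V - U) Y"
      then show "cut_val V E U \<le> cut_val V E Y" using gt[of Y] unfolding cU_def
        by (cases "Y = U") auto
    next
      fix Y assume Y: "terminal_cut V (S \<union> {u0}) (V - U) Y \<and>
        (\<forall>Y'. terminal_cut V (S \<union> {u0}) (V - U) Y' \<longrightarrow> cut_val V E Y \<le> cut_val V E Y')"
      then have "cut_val V E Y \<le> cU" using tU unfolding cU_def by blast
      then show "Y = U" using gt[of Y] Y by (meson not_less)
    qed
    then show ?thesis using SU True by blast
  next
    case False
    define m where "m = 2 * k - 2"
    have m2: "2 \<le> m" using k2 unfolding m_def by auto
    have cardS: "m \<le> card S" using False k2 unfolding m_def by linarith
    obtain s where sbij: "bij_betw s {0..<card S} S" using ex_bij_betw_nat_finite[OF finS] by blast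
    have s_in: "\<And>i. i < m \<Longrightarrow> s i \<in> S"
      using sbij cardS unfolding bij_betw_def by auto
    have s_inj: "\<And>i j. i < m \<Longrightarrow> j < m \<Longrightarrow> s i = s j \<Longrightarrow> i = j"
      using sbij cardS unfolding bij_betw_def inj_on_def by auto
    have exW: "\<exists>W. bad W \<and> W \<inter> (S - {s i}) = {}" if i: "i < m" for i
    proof (rule ccontr)
      assume "\<not> ?thesis"
      then have "hit (S - {s i})" using SU unfolding hit_def by auto
      then have "card S \<le> card (S - {s i})" by (rule Smin)
      moreover have "card (S - {s i}) < card S" by (rule card_Diff1_less[OF finS s_in[OF i]])
      ultimately show False by simp
    qed
    have "\<forall>i. \<exists>W. i < m \<longrightarrow> bad W \<and> W \<inter> (S - {s i}) = {}" using exW by blast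
    then have "\<exists>W. \<forall>i. i < m \<longrightarrow> bad (W i) \<and> W i \<inter> (S - {s i}) = {}" by (rule choice)
    then obtain W where W: "\<And>i. i < m \<Longrightarrow> bad (W i) \<and> W i \<inter> (S - {s i}) = {}" by blast
    have Wbad: "\<And>i. i < m \<Longrightarrow> bad (W i)" and WS: "\<And>i. i < m \<Longrightarrow> W i \<inter> (S - {s i}) = {}"
      using W by auto
    have WU: "\<And>i. i < m \<Longrightarrow> W i \<subseteq> U - {u0}" using Wbad unfolding bad_def by auto
    have Wcut: "\<And>i. i < m \<Longrightarrow> cut_val V E (U - W i) \<le> cU" using Wbad unfolding bad_def by auto
    have sW: "s i \<in> W i" if i: "i < m" for i
    proof -
      have "W i \<inter> S \<noteq> {}" using Shit Wbad[OF i] by blast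
      then show "s i \<in> W i" using WS[OF i] by auto
    qed
    have WSx: "x = s j" if "x \<in> S" "j < m" "x \<in> W j" for x j
      using WS[of j] that by auto
    define dep where "dep = (\<lambda>v. card {j\<in>{..<m}. v \<in> W j})"
    define D where "D = (\<lambda>i. {v \<in> W i. dep v = 1})"
    define L where "L = (\<lambda>t. {v. t < dep v})"
    have depS: "dep x \<le> 1" if x: "x \<in> S" for x
    proof -
      have sub: "{j\<in>{..<m}. x \<in> W j} \<subseteq> {j\<in>{..<m}. s j = x}" using WSx x by force
      have "card {j\<in>{..<m}. s j = x} \<le> 1"
        using s_inj by (auto simp: card_le_Suc0_iff_eq)
      moreover have "card {j\<in>{..<m}. x \<in> W j} \<le> card {j\<in>{..<m}. s j = x}"
        by (rule card_mono[OF _ sub]) simp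
      ultimately show ?thesis unfolding dep_def by linarith
    qed
    have sD: "s i \<in> D i" if i: "i < m" for i
    proof -
      have "{j\<in>{..<m}. s i \<in> W j} = {i}"
      proof
        show "{j\<in>{..<m}. s i \<in> W j} \<subseteq> {i}"
        proof
          fix j assume "j \<in> {j\<in>{..<m}. s i \<in> W j}"
          then have j: "j < m" "s i \<in> W j" by auto
          then have "s i = s j" using WSx[OF s_in[OF i]] by blast
          then have "i = j" using s_inj[OF i j(1)] by blast
          then show "j \<in> {i}" by simp
        qed
        show "{i} \<subseteq> {j\<in>{..<m}. s i \<in> W j}" using sW[OF i] i by auto
      qed
      then have "dep (s i) = 1" unfolding dep_def by simp
      then show ?thesis unfolding D_def using sW[OF i] by auto
    qed
    have DU: "D i \<subseteq> U - {u0}" if "i < m" for i unfolding D_def using WU[OF that] by auto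
    have Ddisj: "D i \<inter> D j = {}" if "i < m" "j < m" "i \<noteq> j" for i j
    proof (rule ccontr)
      assume "D i \<inter> D j \<noteq> {}"
      then obtain v where v: "v \<in> D i" "v \<in> D j" by auto
      then have "card {j\<in>{..<m}. v \<in> W j} = 1" "v \<in> W i" "v \<in> W j"
        unfolding D_def dep_def by auto
      then have "j = i" using dep1_unique[of m v W i j] that by auto
      then show False using that by simp
    qed
    have LU: "L t \<subseteq> U - {u0}" for t
    proof
      fix v assume "v \<in> L t"
      then have "0 < card {j\<in>{..<m}. v \<in> W j}" unfolding L_def dep_def by auto
      then have "{j\<in>{..<m}. v \<in> W j} \<noteq> {}" by (metis card.empty less_nat_zero_code)
      then obtain j where "j < m" "v \<in> W j" by auto
      then show "v \<in> U - {u0}" using WU by auto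
    qed
    have LS: "L t \<inter> S = {}" if "1 \<le> t" for t
      using depS that unfolding L_def by force
    have Lcut: "cU \<le> cut_val V E (U - L t)" if t: "1 \<le> t" for t
    proof (cases "L t = {}")
      case True
      then show ?thesis unfolding cU_def by simp
    next
      case False
      have "\<not> bad (L t)" using Shit LS[OF t] by blast
      then show ?thesis using False LU[of t] unfolding bad_def by auto
    qed
    have mk: "m = (k - 1) + (k - 1)" using k2 unfolding m_def by auto
    define F1 where "F1 = (\<lambda>j. D j)"
    define F2 where "F2 = (\<lambda>j. D (j + (k - 1)))"
    have F1ne: "\<forall>j<k-1. F1 j \<noteq> {}"
    proof (intro allI impI)
      fix j assume "j < k - 1"
      then have "j < m" using mk by linarith
      then show "F1 j \<noteq> {}" unfolding F1_def using sD by blast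
    qed
    have F1U: "\<forall>j<k-1. F1 j \<subseteq> U - {u0}"
    proof (intro allI impI)
      fix j assume "j < k - 1"
      then have "j < m" using mk by linarith
      then show "F1 j \<subseteq> U - {u0}" unfolding F1_def using DU by blast
    qed
    have F1disj: "\<forall>i<k-1. \<forall>j<k-1. i \<noteq> j \<longrightarrow> F1 i \<inter> F1 j = {}"
    proof (intro allI impI)
      fix i j assume "i < k - 1" "j < k - 1" "i \<noteq> j"
      then have "i < m" "j < m" using mk by linarith+
      then show "F1 i \<inter> F1 j = {}" unfolding F1_def using Ddisj \<open>i \<noteq> j\<close> by blast
    qed
    have F2ne: "\<forall>j<k-1. F2 j \<noteq> {}"
    proof (intro allI impI)
      fix j assume "j < k - 1"
      then have "j + (k - 1) < m" using mk by linarith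
      then show "F2 j \<noteq> {}" unfolding F2_def using sD by blast
    qed
    have F2U: "\<forall>j<k-1. F2 j \<subseteq> U - {u0}"
    proof (intro allI impI)
      fix j assume "j < k - 1"
      then have "j + (k - 1) < m" using mk by linarith
      then show "F2 j \<subseteq> U - {u0}" unfolding F2_def using DU by blast
    qed
    have F2disj: "\<forall>i<k-1. \<forall>j<k-1. i \<noteq> j \<longrightarrow> F2 i \<inter> F2 j = {}"
    proof (intro allI impI)
      fix i j assume "i < k - 1" "j < k - 1" "i \<noteq> j"
      then have "i + (k - 1) < m" "j + (k - 1) < m" "i + (k - 1) \<noteq> j + (k - 1)" using mk by linarith+
      then show "F2 i \<inter> F2 j = {}" unfolding F2_def using Ddisj by blast
    qed
    have F1U': "\<forall>j<k-1. F1 j \<subseteq> U" using F1U by blast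
    have F2U': "\<forall>j<k-1. F2 j \<subseteq> U" using F2U by blast
    define Pi1 where "Pi1 = (\<lambda>j. if j < k - 1 then F1 j else V - (\<Union>i<k-1. F1 i))"
    define Pi2 where "Pi2 = (\<lambda>j. if j < k - 1 then F2 j else V - (\<Union>i<k-1. F2 i))"
    have part1: "is_k_partition V k Pi1"
      unfolding Pi1_def by (rule part_from_sets[OF k2 F1ne F1U' F1disj UV VU])
    have part2: "is_k_partition V k Pi2"
      unfolding Pi2_def by (rule part_from_sets[OF k2 F2ne F2U' F2disj UV VU])
    have sub1: "(\<Union>i<h. Pi1 i) \<subset> U"
    proof -
      have "(\<Union>i<h. Pi1 i) \<subseteq> U - {u0}"
      proof
        fix v assume "v \<in> (\<Union>i<h. Pi1 i)"
        then obtain i where i: "i < h" "v \<in> Pi1 i" by auto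
        then have "i < k - 1" using hk k2 by linarith
        then show "v \<in> U - {u0}" using i F1U unfolding Pi1_def by auto
      qed
      then show ?thesis using u0U by auto
    qed
    have sub2: "(\<Union>i<h. Pi2 i) \<subset> U"
    proof -
      have "(\<Union>i<h. Pi2 i) \<subseteq> U - {u0}"
      proof
        fix v assume "v \<in> (\<Union>i<h. Pi2 i)"
        then obtain i where i: "i < h" "v \<in> Pi2 i" by auto
        then have "i < k - 1" using hk k2 by linarith
        then show "v \<in> U - {u0}" using i F2U unfolding Pi2_def by auto
      qed
      then show ?thesis using u0U by auto
    qed
    define A1 where "A1 = (\<lambda>e. \<exists>i<k-1. e \<inter> F1 i \<noteq> {} \<and> \<not> e \<subseteq> F1 i)"
    define A2 where "A2 = (\<lambda>e. \<exists>i<k-1. e \<inter> F2 i \<noteq> {} \<and> \<not> e \<subseteq> F2 i)"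
    have c1: "OPT < size (filter_mset A1 E)"
    proof -
      have "OPT < partition_cost E k Pi1" by (rule strict[OF part1 sub1])
      also have "partition_cost E k Pi1 \<le> size (filter_mset A1 E)"
        unfolding Pi1_def A1_def by (rule cost_le[OF F1disj])
      finally show ?thesis .
    qed
    have c2: "OPT < size (filter_mset A2 E)"
    proof -
      have "OPT < partition_cost E k Pi2" by (rule strict[OF part2 sub2])
      also have "partition_cost E k Pi2 \<le> size (filter_mset A2 E)"
        unfolding Pi2_def A2_def by (rule cost_le[OF F2disj])
      finally show ?thesis .
    qed
    define H1 where "H1 = {..<k-1}"
    define H2 where "H2 = {k-1..<m}"
    have H1m: "H1 \<subseteq> {..<m}" and H2m: "H2 \<subseteq> {..<m}" and H12: "H1 \<inter> H2 = {}"
      unfolding H1_def H2_def using mk by auto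
    define CL where "CL = (\<lambda>t e. e \<inter> (U - L t) \<noteq> {} \<and> e \<inter> (V - (U - L t)) \<noteq> {})"
    define CW where "CW = (\<lambda>i e. e \<inter> (U - W i) \<noteq> {} \<and> e \<inter> (V - (U - W i)) \<noteq> {})"
    have edge: "(if A1 e then 1 else 0) + (if A2 e then 1 else 0) + card {t\<in>{2..<m}. CL t e}
        \<le> card {i\<in>{..<m}. CW i e}" if eV: "e \<subseteq> V" for e
    proof -
      define a where "a = e \<inter> U"
      define ob where "ob = (e \<inter> (V - U) \<noteq> {})"
      have crN: "(e \<inter> (U - N) \<noteq> {} \<and> e \<inter> (V - (U - N)) \<noteq> {}) \<longleftrightarrow> (\<not> a \<subseteq> N \<and> (ob \<or> a \<inter> N \<noteq> {}))"
        if "N \<subseteq> U" for N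
        using that eV UV unfolding a_def ob_def by blast
      have crD: "(e \<inter> N \<noteq> {} \<and> \<not> e \<subseteq> N) \<longleftrightarrow> (a \<inter> N \<noteq> {} \<and> (ob \<or> \<not> a \<subseteq> N))"
        if "N \<subseteq> U" for N
        using that eV UV unfolding a_def ob_def by blast
      have DU': "D i \<subseteq> U" if "i < m" for i using DU[OF that] by blast
      have A1eq: "A1 e \<longleftrightarrow> (\<exists>i\<in>H1. a \<inter> D i \<noteq> {} \<and> (ob \<or> \<not> a \<subseteq> D i))"
      proof -
        have "\<forall>i<k-1. (e \<inter> F1 i \<noteq> {} \<and> \<not> e \<subseteq> F1 i) \<longleftrightarrow> (a \<inter> D i \<noteq> {} \<and> (ob \<or> \<not> a \<subseteq> D i))"
        proof (intro allI impI)
          fix i assume "i < k - 1"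
          then have "i < m" using mk by linarith
          then show "(e \<inter> F1 i \<noteq> {} \<and> \<not> e \<subseteq> F1 i) \<longleftrightarrow> (a \<inter> D i \<noteq> {} \<and> (ob \<or> \<not> a \<subseteq> D i))"
            unfolding F1_def using crD[OF DU'] by blast
        qed
        then show ?thesis unfolding A1_def H1_def by auto
      qed
      have A2eq: "A2 e \<longleftrightarrow> (\<exists>i\<in>H2. a \<inter> D i \<noteq> {} \<and> (ob \<or> \<not> a \<subseteq> D i))"
      proof -
        have eqv: "\<forall>i<k-1. (e \<inter> F2 i \<noteq> {} \<and> \<not> e \<subseteq> F2 i) \<longleftrightarrow>
                       (a \<inter> D (i + (k - 1)) \<noteq> {} \<and> (ob \<or> \<not> a \<subseteq> D (i + (k - 1))))"
        proof (intro allI impI)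
          fix i assume "i < k - 1"
          then have "i + (k - 1) < m" using mk by linarith
          then show "(e \<inter> F2 i \<noteq> {} \<and> \<not> e \<subseteq> F2 i) \<longleftrightarrow>
                       (a \<inter> D (i + (k - 1)) \<noteq> {} \<and> (ob \<or> \<not> a \<subseteq> D (i + (k - 1))))"
            unfolding F2_def using crD[OF DU'] by blast
        qed
        show ?thesis
        proof
          assume "A2 e"
          then obtain i where i: "i < k - 1" "e \<inter> F2 i \<noteq> {} \<and> \<not> e \<subseteq> F2 i" unfolding A2_def by blast
          then have "i + (k - 1) \<in> H2" unfolding H2_def using mk by auto
          then show "\<exists>i\<in>H2. a \<inter> D i \<noteq> {} \<and> (ob \<or> \<not> a \<subseteq> D i)" using eqv i by blast
        next
          assume "\<exists>i\<in>H2. a \<inter> D i \<noteq> {} \<and> (ob \<or> \<not> a \<subseteq> D i)"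
          then obtain j where j: "j \<in> H2" "a \<inter> D j \<noteq> {} \<and> (ob \<or> \<not> a \<subseteq> D j)" by blast
          define i where "i = j - (k - 1)"
          have i: "i < k - 1" "j = i + (k - 1)" using j(1) mk unfolding H2_def i_def by auto
          then show "A2 e" unfolding A2_def using eqv j(2) by auto
        qed
      qed
      have CLeq: "{t\<in>{2..<m}. CL t e} = {t\<in>{2..<m}. \<not> a \<subseteq> L t \<and> (ob \<or> a \<inter> L t \<noteq> {})}"
      proof (rule Collect_cong)
        fix t
        have "L t \<subseteq> U" using LU[of t] by blast
        then show "(t \<in> {2..<m} \<and> CL t e) \<longleftrightarrow> (t \<in> {2..<m} \<and> \<not> a \<subseteq> L t \<and> (ob \<or> a \<inter> L t \<noteq> {}))"
          unfolding CL_def using crN by blast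
      qed
      have CWeq: "{i\<in>{..<m}. CW i e} = {i\<in>{..<m}. \<not> a \<subseteq> W i \<and> (ob \<or> a \<inter> W i \<noteq> {})}"
      proof (rule Collect_cong)
        fix i
        show "(i \<in> {..<m} \<and> CW i e) \<longleftrightarrow> (i \<in> {..<m} \<and> \<not> a \<subseteq> W i \<and> (ob \<or> a \<inter> W i \<noteq> {}))"
        proof (cases "i < m")
          case True
          have "W i \<subseteq> U" using WU[OF True] by blast
          then show ?thesis unfolding CW_def using crN by blast
        next
          case False
          then show ?thesis by simp
        qed
      qed
      have EC: "(if \<exists>i\<in>H1. a \<inter> D i \<noteq> {} \<and> (ob \<or> \<not> a \<subseteq> D i) then 1 else 0)
       + (if \<exists>i\<in>H2. a \<inter> D i \<noteq> {} \<and> (ob \<or> \<not> a \<subseteq> D i) then 1 else 0)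
       + card {t\<in>{2..<m}. \<not> a \<subseteq> L t \<and> (ob \<or> a \<inter> L t \<noteq> {})}
       \<le> card {i\<in>{..<m}. \<not> a \<subseteq> W i \<and> (ob \<or> a \<inter> W i \<noteq> {})}"
        unfolding D_def L_def dep_def by (rule edge_comb[OF m2 H1m H2m H12])
      show ?thesis using EC unfolding A1eq A2eq CLeq CWeq .
    qed
    have sumI: "size (filter_mset A1 E) + size (filter_mset A2 E) + (\<Sum>t\<in>{2..<m}. size (filter_mset (CL t) E))
         \<le> (\<Sum>i\<in>{..<m}. size (filter_mset (CW i) E))"
    proof -
      have "\<forall>e\<in>#E. (if A1 e then 1 else 0) + (if A2 e then 1 else 0) + card {t\<in>{2..<m}. CL t e}
        \<le> card {i\<in>{..<m}. CW i e}" using edge EV by blast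
      then show ?thesis by (rule sum_edges[OF finite_atLeastLessThan finite_lessThan])
    qed
    have sumL: "(m - 2) * cU \<le> (\<Sum>t\<in>{2..<m}. size (filter_mset (CL t) E))"
    proof -
      have "(\<Sum>t\<in>{2..<m}. cU) \<le> (\<Sum>t\<in>{2..<m}. size (filter_mset (CL t) E))"
      proof (rule sum_mono)
        fix t assume "t \<in> {2..<m}"
        then have "1 \<le> t" by auto
        then show "cU \<le> size (filter_mset (CL t) E)"
          using Lcut[of t] unfolding CL_def cut_val_def by simp
      qed
      then show ?thesis by simp
    qed
    have sumW: "(\<Sum>i\<in>{..<m}. size (filter_mset (CW i) E)) \<le> m * cU"
    proof -
      have "(\<Sum>i\<in>{..<m}. size (filter_mset (CW i) E)) \<le> (\<Sum>i\<in>{..<m}. cU)"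
      proof (rule sum_mono)
        fix i assume "i \<in> {..<m}"
        then show "size (filter_mset (CW i) E) \<le> cU"
          using Wcut[of i] unfolding CW_def cut_val_def by simp
      qed
      then show ?thesis by simp
    qed
    have mcU: "m * cU = (m - 2) * cU + 2 * cU"
    proof -
      have "m = (m - 2) + 2" using m2 by simp
      then show ?thesis by (metis add_mult_distrib)
    qed
    have False using c1 c2 cU_le sumI sumL sumW mcU by linarith
    then show ?thesis by simp
  qed
qed

end
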